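(* Let $n \ge 2$ and let $\ell(0) \in \mathbb{N}_0^n$ be an arbitrary initial load vector of the random pairwise load balancing process described in the context, with $m=\sum_i \ell_i(0)$ tokens, average load $\varnothing = m/n$, and initial discrepancy $\Delta = \max_i \ell_i(0) - \min_i \ell_i(0) > 0$. Let $T$ be the first time step at which every node has load in $\{\mathrm{round}(\varnothing)-1, \mathrm{round}(\varnothing), \mathrm{round}(\varnothing)+1\}$. Then with high probability (i.e., with probability $1-O(1/n)$), $T = O(n\log \Delta + n\log n)$, where the constant hidden in $O(\cdot)$ is absolute (independent of $n$, $m$, $\Delta$ and $\ell(0)$).
   Context: Random pairwise load balancing process: $n$ nodes (complete graph), $m$ indistinguishable tokens. The load vector at time $t\in\mathbb{N}_0$ is $\ell(t)=(\ell_1(t),\dots,\ell_n(t))\in\mathbb{Z}^n$, where $\ell_i(t)$ is the number of tokens at node $i$. In each time step $t$, independently of everything before, an ordered pair $(u,v)$ of distinct nodes is chosen uniformly at random, and the loads are updated to $\ell_u(t+1)=\lceil(\ell_u(t)+\ell_v(t))/2\rceil$, $\ell_v(t+1)=\lfloor(\ell_u(t)+\ell_v(t))/2\rfloor$; all other loads are unchanged. The average load is $\varnothing=m/n$ and $\mathrm{round}(\varnothing)$ denotes $\varnothing$ rounded to the nearest integer. *)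

theory Defs
  imports "HOL-Probability.Probability"
begin

text \<open>Load vectors of n nodes are int lists of length n; nodes are 0..n-1.\<close>

definition lb_pairs :: "nat \<Rightarrow> (nat \<times> nat) set" where
  "lb_pairs n = {(u, v). u < n \<and> v < n \<and> u \<noteq> v}"

definition lb_balance :: "int list \<Rightarrow> nat \<times> nat \<Rightarrow> int list" where
  "lb_balance l p = (case p of (u, v) \<Rightarrow>
     l[u := \<lceil>real_of_int (l ! u + l ! v) / 2\<rceil>, v := \<lfloor>real_of_int (l ! u + l ! v) / 2\<rfloor>])"

definition lb_step :: "int list \<Rightarrow> int list pmf" where
  "lb_step l = map_pmf (lb_balance l) (pmf_of_set (lb_pairs (length l)))"

definition in_band :: "int \<Rightarrow> int list \<Rightarrow> bool" where
  "in_band r l = (\<forall>i < length l. l ! i \<in> {r - 1, r, r + 1})"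

text \<open>Joint law of (load vector at time t, whether the band was reached at some time s \<le> t).
  Hence the probability of the flag being True is P(T \<le> t).\<close>
fun lb_hit :: "int \<Rightarrow> nat \<Rightarrow> int list \<Rightarrow> (int list \<times> bool) pmf" where
  "lb_hit r 0 l = return_pmf (l, in_band r l)"
| "lb_hit r (Suc t) l =
     bind_pmf (lb_hit r t l) (\<lambda>(x, b). map_pmf (\<lambda>y. (y, b \<or> in_band r y)) (lb_step x))"

definition discrepancy :: "int list \<Rightarrow> int" where
  "discrepancy l = Max (set l) - Min (set l)"

end

theory Submission imports Defs begin

lemma ceil_half: "\<lceil>real_of_int s / 2\<rceil> = (s + 1) div 2"
proof -
  have "\<lceil>real_of_int s / 2\<rceil> = - \<lfloor>real_of_int (- s) / 2\<rfloor>"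
    by (simp add: ceiling_def)
  also have "\<lfloor>real_of_int (- s) / 2\<rfloor> = (- s) div 2"
    using floor_divide_of_int_eq[of "-s" 2] by simp
  finally show ?thesis by presburger
qed

lemma floor_half: "\<lfloor>real_of_int s / 2\<rfloor> = s div 2"
  using floor_divide_of_int_eq[of s 2] by simp

lemma bal_eq: "lb_balance l (u, v) = l[u := (l!u + l!v + 1) div 2, v := (l!u + l!v) div 2]"
  unfolding lb_balance_def by (simp only: prod.case ceil_half floor_half)

lemma pairs_Sigma: "lb_pairs n = Sigma {..<n} (\<lambda>u. {..<n} - {u})"
  unfolding lb_pairs_def by auto

lemma pairs_finite: "finite (lb_pairs n)"
  unfolding pairs_Sigma by auto

lemma pairs_card: "card (lb_pairs n) = n * (n - 1)"
  unfolding pairs_Sigma by simp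

lemma pairs_ne: "n \<ge> 2 \<Longrightarrow> lb_pairs n \<noteq> {}"
proof -
  assume "n \<ge> 2"
  then have "(0,1) \<in> lb_pairs n" unfolding lb_pairs_def by auto
  then show ?thesis by auto
qed

lemma sum_pairs:
  fixes g :: "nat \<times> nat \<Rightarrow> real"
  shows "(\<Sum>p\<in>lb_pairs n. g p) = (\<Sum>u<n. \<Sum>v<n. g (u, v)) - (\<Sum>u<n. g (u, u))"
proof -
  have "(\<Sum>p\<in>lb_pairs n. g p) = (\<Sum>u<n. \<Sum>v\<in>{..<n} - {u}. g (u, v))"
    unfolding pairs_Sigma by (simp add: sum.Sigma)
  also have "\<dots> = (\<Sum>u<n. (\<Sum>v<n. g (u, v)) - g (u, u))"
    by (intro sum.cong refl) (simp add: sum_diff1)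
  finally show ?thesis by (simp add: sum_subtractf)
qed

lemma sum_upd2:
  fixes F :: "int \<Rightarrow> real"
  assumes "u < length l" "v < length l" "u \<noteq> v"
  shows "(\<Sum>i<length l. F (l[u := c, v := d] ! i))
       = (\<Sum>i<length l. F (l ! i)) - F (l!u) - F (l!v) + F c + F d"
proof -
  have "\<And>i. i < length l \<Longrightarrow> F (l[u := c, v := d] ! i) =
     F (l ! i) + (if i = u then F c - F (l!u) else 0) + (if i = v then F d - F (l!v) else 0)"
    using assms by (auto simp: nth_list_update)
  then have "(\<Sum>i<length l. F (l[u := c, v := d] ! i)) =
     (\<Sum>i<length l. F (l ! i) + (if i = u then F c - F (l!u) else 0) + (if i = v then F d - F (l!v) else 0))"
    by (intro sum.cong) auto
  also have "\<dots> = (\<Sum>i<length l. F (l ! i)) + (F c - F (l!u)) + (F d - F (l!v))"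
    using assms by (simp add: sum.distrib)
  finally show ?thesis by simp
qed

lemma bal_len: "length (lb_balance l p) = length l"
  by (cases p) (simp add: bal_eq)

lemma sl_upd: "k < length xs \<Longrightarrow> sum_list (xs[k := x]) = sum_list xs + x - xs ! k" for xs :: "int list"
  by (induction xs arbitrary: k) (auto split: nat.split)

lemma bal_sum: assumes "p \<in> lb_pairs (length l)"
  shows "sum_list (lb_balance l p) = sum_list l"
proof -
  obtain u v where p: "p = (u, v)" "u < length l" "v < length l" "u \<noteq> v"
    using assms unfolding lb_pairs_def by auto
  have cd: "(l!u + l!v + 1) div 2 + (l!u + l!v) div 2 = l!u + l!v" by presburger
  show ?thesis using p cd by (simp add: bal_eq sl_upd nth_list_update)
qed

lemma set_step: "length l \<ge> 2 \<Longrightarrow> set_pmf (lb_step l) = lb_balance l ` lb_pairs (length l)"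
  unfolding lb_step_def using pairs_finite pairs_ne by simp

lemma sqsum_id: "2 * (p^2 + q^2) = (p + q)^2 + (p - q)^2" for p q :: int
  by (simp add: power2_eq_square algebra_simps)

lemma conv1: fixes a b p q :: int
  assumes "p + q = a + b" "\<bar>p - q\<bar> \<le> 1"
  shows "(max p 0)^2 + (max q 0)^2 \<le> (max a 0)^2 + (max b 0)^2"
proof (cases "p \<le> 0 \<and> q \<le> 0")
  case True then show ?thesis by (simp add: max_def)
next
  case F: False
  show ?thesis
  proof (cases "p \<ge> 0 \<and> q \<ge> 0")
    case True
    then have "max p 0 = p" "max q 0 = q" by auto
    then have L: "(max p 0)^2 + (max q 0)^2 = p^2 + q^2" by simp
    have pq: "(p - q)^2 \<le> 1" proof -
      have "p - q \<in> {-1,0,1}" using assms(2) by auto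
      then show ?thesis by auto
    qed
    show ?thesis
    proof (cases "a \<ge> 0 \<and> b \<ge> 0")
      case True
      then have "max a 0 = a" "max b 0 = b" by auto
      then have R: "(max a 0)^2 + (max b 0)^2 = a^2 + b^2" by simp
      have "(p - q)^2 \<le> (a - b)^2"
      proof (cases "a = b")
        case True
        then have "p = q" using assms by presburger
        then show ?thesis by simp
      next
        case False
        then have "1 \<le> \<bar>a - b\<bar>" by linarith
        then have "1 \<le> \<bar>a - b\<bar>^2" using power_mono[of 1 "\<bar>a - b\<bar>" 2] by simp
        then show ?thesis using pq by simp
      qed
      then have "2 * (p^2 + q^2) \<le> 2 * (a^2 + b^2)" using sqsum_id[of p q] sqsum_id[of a b] assms(1) by simp
      then show ?thesis using L R by simp
    next
      case False
      then have "a < 0 \<or> b < 0" by auto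
      then show ?thesis
      proof
        assume "a < 0"
        then have b: "b \<ge> p + q" using assms(1) by linarith
        then have "(p + q)^2 \<le> b^2" using True by (simp add: power_mono)
        then have "p^2 + q^2 \<le> b^2" using True mult_nonneg_nonneg[of p q] power2_sum[of p q] by linarith
        moreover have "max a 0 = 0" "max b 0 = b" using \<open>a<0\<close> b True by auto
        ultimately show ?thesis using L by simp
      next
        assume "b < 0"
        then have b: "a \<ge> p + q" using assms(1) by linarith
        then have "(p + q)^2 \<le> a^2" using True by (simp add: power_mono)
        then have "p^2 + q^2 \<le> a^2" using True mult_nonneg_nonneg[of p q] power2_sum[of p q] by linarith
        moreover have "max b 0 = 0" "max a 0 = a" using \<open>b<0\<close> b True by auto
        ultimately show ?thesis using L by simp
      qed
    qed
  next
    case False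
    with F assms(2) have "(p = 1 \<and> q = 0) \<or> (p = 0 \<and> q = 1)" by auto
    then have "a + b = 1" "(max p 0)^2 + (max q 0)^2 = 1" using assms(1) by auto
    moreover have "1 \<le> (max a 0)^2 + (max b 0)^2"
    proof (cases "a \<ge> 1")
      case True
      then have "1 \<le> (max a 0)^2" using one_le_power[of "max a 0" 2] by simp
      then show ?thesis using zero_le_power2[of "max b 0"] by linarith
    next
      case False
      then have "b \<ge> 1" using \<open>a + b = 1\<close> by linarith
      then have "1 \<le> (max b 0)^2" using one_le_power[of "max b 0" 2] by simp
      then show ?thesis using zero_le_power2[of "max a 0"] by linarith
    qed
    ultimately show ?thesis by simp
  qed
qed

lemma conv2: fixes a b p q :: int
  assumes "p + q = a + b" "\<bar>p - q\<bar> \<le> 1" "b \<le> -1"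
  shows "2 * ((max p 0)^2 + (max q 0)^2) \<le> (max a 0)^2"
proof (cases "p \<ge> 0 \<and> q \<ge> 0")
  case True
  have pq: "(p - q)^2 \<le> 1" proof -
    have "p - q \<in> {-1,0,1}" using assms(2) by auto
    then show ?thesis by auto
  qed
  have a: "a \<ge> p + q + 1" using assms by linarith
  then have "(p + q + 1)^2 \<le> a^2" using True by (simp add: power_mono)
  moreover have "2 * (p^2 + q^2) \<le> (p + q + 1)^2"
    using sqsum_id[of p q] pq True by (simp add: power2_eq_square algebra_simps)
  ultimately have X: "2 * (p^2 + q^2) \<le> a^2" by linarith
  have "max p 0 = p" "max q 0 = q" "max a 0 = a" using True a by auto
  then show ?thesis using X by simp
next
  case False
  with assms(2) have "max p 0 = 0 \<and> max q 0 = 0" by auto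
  then show ?thesis by simp
qed
lemma gen_id: fixes C F X Y a :: real assumes "C + F = X + Y"
  shows "(X - a)^2 + (Y - a)^2 - (C - a)^2 - (F - a)^2 = ((X - Y)^2 - (C - F)^2) / 2"
proof -
  have e: "C = X + Y - F" using assms by linarith
  have "(X - a)^2 + (Y - a)^2 - ((X + Y - F) - a)^2 - (F - a)^2 = ((X - Y)^2 - ((X + Y - F) - F)^2) / 2"
    by (simp add: field_simps power2_eq_square)
  then show ?thesis using e by simp
qed

lemma pair_phi:
  fixes x y :: int and a :: real
  defines "c \<equiv> (x + y + 1) div 2" and "f \<equiv> (x + y) div 2"
  shows "(x - a)^2 + (y - a)^2 - (c - a)^2 - (f - a)^2 \<ge> ((x - y)^2 - 1) / 2"
    and "(x - a)^2 + (y - a)^2 - (c - a)^2 - (f - a)^2 \<ge> 0"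
proof -
  have cf: "c + f = x + y" unfolding c_def f_def by presburger
  have d: "c - f = 0 \<or> c - f = 1" unfolding c_def f_def by presburger
  have d0: "x = y \<Longrightarrow> c = f" unfolding c_def f_def by presburger
  have cfr: "real_of_int c + real_of_int f = real_of_int x + real_of_int y" using cf by (metis of_int_add)
  have key: "(x - a)^2 + (y - a)^2 - (c - a)^2 - (f - a)^2
        = ((real_of_int x - y)^2 - (real_of_int c - f)^2) / 2"
    using gen_id[OF cfr] .
  have sq0: "(c - f)^2 \<le> 1" using d by auto
  have sq: "(real_of_int c - f)^2 \<le> 1"
  proof -
    have "(real_of_int c - f)^2 = real_of_int ((c - f)^2)" by simp
    then show ?thesis using sq0 by (metis of_int_le_1_iff)
  qed
  show "(x - a)^2 + (y - a)^2 - (c - a)^2 - (f - a)^2 \<ge> ((x - y)^2 - 1) / 2"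
    using key sq by simp
  show "(x - a)^2 + (y - a)^2 - (c - a)^2 - (f - a)^2 \<ge> 0"
  proof (cases "x = y")
    case True then show ?thesis using key d0 by simp
  next
    case False
    then have "\<bar>real_of_int x - y\<bar> \<ge> 1" by linarith
    then have "(real_of_int x - y)^2 \<ge> 1"
      by (metis abs_le_square_iff abs_one one_power2)
    then show ?thesis using key sq by simp
  qed
qed

definition hu :: "int \<Rightarrow> int \<Rightarrow> real" where "hu r x = real_of_int ((max (x - r - 1) 0)^2)"
definition hd :: "int \<Rightarrow> int \<Rightarrow> real" where "hd r x = real_of_int ((max (r - 1 - x) 0)^2)"
definition bnd :: "int \<Rightarrow> int \<Rightarrow> int \<Rightarrow> real" where
  "bnd r x y = (if y \<le> r then hu r x / 2 else 0) + (if r \<le> y then hd r x / 2 else 0)"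

lemma hu_nn: "hu r x \<ge> 0" and hd_nn: "hd r x \<ge> 0" unfolding hu_def hd_def by auto

lemma pair_q:
  fixes x y r :: int
  defines "c \<equiv> (x + y + 1) div 2" and "f \<equiv> (x + y) div 2"
  shows "hu r x + hd r x + hu r y + hd r y - (hu r c + hd r c + hu r f + hd r f) \<ge> bnd r x y"
proof -
  have s: "c + f = x + y" "\<bar>c - f\<bar> \<le> 1" unfolding c_def f_def by presburger+
  have u1: "(max (c - r - 1) 0)^2 + (max (f - r - 1) 0)^2 \<le> (max (x - r - 1) 0)^2 + (max (y - r - 1) 0)^2"
    by (rule conv1) (use s in auto)
  have d1: "(max (r - 1 - c) 0)^2 + (max (r - 1 - f) 0)^2 \<le> (max (r - 1 - x) 0)^2 + (max (r - 1 - y) 0)^2"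
    by (rule conv1) (use s in auto)
  have U1: "hu r c + hu r f \<le> hu r x + hu r y" using u1 unfolding hu_def
    by (metis of_int_add of_int_le_iff)
  have D1: "hd r c + hd r f \<le> hd r x + hd r y" using d1 unfolding hd_def
    by (metis of_int_add of_int_le_iff)
  have U2: "hu r c + hu r f \<le> hu r x / 2 + hu r y" if "y \<le> r"
  proof -
    have "2 * ((max (c - r - 1) 0)^2 + (max (f - r - 1) 0)^2) \<le> (max (x - r - 1) 0)^2"
      by (rule conv2[where b="y - r - 1"]) (use s that in arith)+
    moreover have "hu r y = 0" using that unfolding hu_def by simp
    ultimately show ?thesis unfolding hu_def
      by (metis (no_types, opaque_lifting) add.right_neutral le_divide_eq_numeral1(1) mult.commute of_int_add of_int_le_iff of_int_mult of_int_numeral)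
  qed
  have D2: "hd r c + hd r f \<le> hd r x / 2 + hd r y" if "r \<le> y"
  proof -
    have "2 * ((max (r - 1 - c) 0)^2 + (max (r - 1 - f) 0)^2) \<le> (max (r - 1 - x) 0)^2"
      by (rule conv2[where b="r - 1 - y"]) (use s that in arith)+
    moreover have "hd r y = 0" using that unfolding hd_def by simp
    ultimately show ?thesis unfolding hd_def
      by (metis (no_types, opaque_lifting) add.right_neutral le_divide_eq_numeral1(1) mult.commute of_int_add of_int_le_iff of_int_mult of_int_numeral)
  qed
  show ?thesis unfolding bnd_def
    using U1 D1 U2 D2 by (auto split: if_splits)
qed

lemma bnd_nn: "bnd r x y \<ge> 0" unfolding bnd_def using hu_nn hd_nn by auto

lemma bnd_diag: "bnd r x x = 0" unfolding bnd_def hu_def hd_def by auto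

lemma q_le_sq: assumes "\<bar>real_of_int r - a\<bar> \<le> 1/2"
  shows "hu r x + hd r x \<le> (real_of_int x - a)^2"
proof (cases "x \<ge> r + 1")
  case True
  then have "hu r x + hd r x = (real_of_int x - r - 1)^2" unfolding hu_def hd_def by simp
  also have "\<dots> \<le> (real_of_int x - a)^2"
  proof (intro power_mono)
    have "real_of_int r + 1 \<le> real_of_int x" using True by simp
    moreover have "a \<le> real_of_int r + 1/2" using assms abs_le_iff[of "real_of_int r - a" "1/2"] by linarith
    ultimately show "real_of_int x - r - 1 \<le> real_of_int x - a" "0 \<le> real_of_int x - r - 1"
      by linarith+
  qed
  finally show ?thesis .
next
  case False
  show ?thesis
  proof (cases "x \<le> r - 1")
    case True
    then have "hu r x + hd r x = (real_of_int r - 1 - x)^2" unfolding hu_def hd_def by simp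
    also have "\<dots> = (real_of_int x - (r - 1))^2" by (simp add: power2_commute)
    also have "\<dots> \<le> (real_of_int x - a)^2"
    proof -
      have "real_of_int x \<le> real_of_int r - 1" using True by simp
      moreover have "a \<ge> real_of_int r - 1/2" using assms abs_le_iff[of "real_of_int r - a" "1/2"] by linarith
      ultimately have "\<bar>real_of_int x - (r - 1)\<bar> \<le> \<bar>real_of_int x - a\<bar>"
        by linarith
      then show ?thesis using abs_le_square_iff by blast
    qed
    finally show ?thesis .
  next
    case F2: False
    then have "hu r x + hd r x = 0" using False unfolding hu_def hd_def by simp
    then show ?thesis by simp
  qed
qed


definition phi :: "real \<Rightarrow> int list \<Rightarrow> real" where
  "phi a l = (\<Sum>i<length l. (real_of_int (l!i) - a)^2)"
definition V2 :: "int \<Rightarrow> int list \<Rightarrow> real" where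
  "V2 r l = (\<Sum>i<length l. hu r (l!i) + hd r (l!i))"

lemma phi_nn: "phi a l \<ge> 0" unfolding phi_def by (simp add: sum_nonneg)
lemma V2_nn: "V2 r l \<ge> 0" unfolding V2_def using hu_nn hd_nn by (simp add: sum_nonneg add_nonneg_nonneg)

lemma V2_le_phi: "\<bar>real_of_int r - a\<bar> \<le> 1/2 \<Longrightarrow> V2 r l \<le> phi a l"
  unfolding V2_def phi_def by (intro sum_mono q_le_sq)

lemma phi_bal:
  assumes "u < length l" "v < length l" "u \<noteq> v"
  shows "phi a (lb_balance l (u,v)) \<le> phi a l - ((real_of_int (l!u) - l!v)^2 - 1) / 2"
    and "phi a (lb_balance l (u,v)) \<le> phi a l"
proof -
  let ?c = "(l!u + l!v + 1) div 2" and ?f = "(l!u + l!v) div 2"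
  have e: "phi a (lb_balance l (u,v)) = phi a l - ((l!u - a)^2 + (l!v - a)^2 - (?c - a)^2 - (?f - a)^2)"
    unfolding phi_def bal_eq length_list_update
    using sum_upd2[OF assms, of "\<lambda>z. (real_of_int z - a)^2" ?c ?f] by simp
  show "phi a (lb_balance l (u,v)) \<le> phi a l - ((real_of_int (l!u) - l!v)^2 - 1) / 2"
  proof -
    have "real_of_int ((l!u - l!v)^2 - 1) = (real_of_int (l!u) - l!v)^2 - 1" by simp
    note p1 = pair_phi(1)[where x="l!u" and y="l!v" and a=a, unfolded of_int_diff of_int_power of_int_1]
    show ?thesis using e p1 by linarith
  qed
  show "phi a (lb_balance l (u,v)) \<le> phi a l"
    using e pair_phi(2)[where x="l!u" and y="l!v" and a=a] by linarith
qed

lemma V2_bal: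
  assumes "u < length l" "v < length l" "u \<noteq> v"
  shows "V2 r (lb_balance l (u,v)) \<le> V2 r l - bnd r (l!u) (l!v)"
proof -
  let ?c = "(l!u + l!v + 1) div 2" and ?f = "(l!u + l!v) div 2"
  have e: "V2 r (lb_balance l (u,v)) = V2 r l - (hu r (l!u) + hd r (l!u)) - (hu r (l!v) + hd r (l!v))
      + (hu r ?c + hd r ?c) + (hu r ?f + hd r ?f)"
    unfolding V2_def bal_eq length_list_update
    using sum_upd2[OF assms, of "\<lambda>z. hu r z + hd r z" ?c ?f] by simp
  show ?thesis using e pair_q[of r "l!u" "l!v"] by simp
qed

lemma sum_dev0:
  assumes "length l = n" "n > 0" "a = real_of_int (sum_list l) / n"
  shows "(\<Sum>i<n. real_of_int (l!i) - a) = 0"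
proof -
  have "real_of_int (sum_list l) = (\<Sum>i<n. real_of_int (l!i))"
    using assms(1) by (simp add: sum_list_sum_nth atLeast0LessThan)
  then show ?thesis using assms by (simp add: sum_subtractf)
qed

lemma sq_identity:
  fixes d :: "nat \<Rightarrow> real"
  assumes "(\<Sum>i<n. d i) = 0"
  shows "(\<Sum>u<n. \<Sum>v<n. (d u - d v)^2) = 2 * n * (\<Sum>i<n. (d i)^2)"
proof -
  have "(\<Sum>u<n. \<Sum>v<n. (d u - d v)^2) = (\<Sum>u<n. \<Sum>v<n. (d u)^2 + (d v)^2 - 2 * (d u * d v))"
    by (simp add: power2_diff algebra_simps)
  also have "\<dots> = (\<Sum>u<n. n * (d u)^2 + (\<Sum>v<n. (d v)^2) - 2 * (d u * (\<Sum>v<n. d v)))"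
    by (simp add: sum.distrib sum_subtractf sum_distrib_left)
  also have "\<dots> = 2 * n * (\<Sum>i<n. (d i)^2)"
    using assms by (simp add: sum.distrib sum_distrib_left mult.assoc)
  finally show ?thesis by simp
qed

lemma aux1: "-1 - z^2/4 \<le> (z::real)"
proof -
  have "0 \<le> (z+2)^2" by simp
  moreover have "(z+2)^2 = z^2 + 4*z + 4" by (simp add: power2_eq_square algebra_simps)
  ultimately show ?thesis by linarith
qed

lemma aux2: "-1 - z^2/4 \<le> - (z::real)"
proof -
  have "0 \<le> (z-2)^2" by simp
  moreover have "(z-2)^2 = z^2 - 4*z + 4" by (simp add: power2_eq_square algebra_simps)
  ultimately show ?thesis by linarith
qed

lemma lin_aux: "(X::real) \<le> Y \<Longrightarrow> Y = 0 \<Longrightarrow> X = N/2 - 3/2 * L - P/4 \<Longrightarrow> L \<ge> (2 * N - P) / 6"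
  by simp

lemma count_low:
  assumes "(\<Sum>i<n. real_of_int (l!i) - a) = 0" "\<bar>real_of_int r - a\<bar> \<le> 1/2"
  shows "(\<Sum>i<n. if l!i \<le> r then 1 else 0) \<ge> (2 * n - (\<Sum>i<n. (real_of_int (l!i) - a)^2)) / 6"
proof -
  have a1: "a \<le> real_of_int r + 1/2" using assms(2) abs_le_iff[of "real_of_int r - a" "1/2"] by linarith
  have pt: "real_of_int (l!i) - a \<ge> 1/2 - 3/2 * (if l!i \<le> r then 1 else 0) - (real_of_int (l!i) - a)^2 / 4" for i
  proof (cases "l!i \<le> r")
    case True
    then show ?thesis using aux1[of "real_of_int (l!i) - a"] by simp
  next
    case False
    then have h: "real_of_int (l!i) \<ge> real_of_int r + 1" by simp
    have "(if l!i \<le> r then 1 else 0) = (0::real)" using False by simp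
    moreover have "0 \<le> (real_of_int (l!i) - a)^2/4" by simp
    ultimately show ?thesis using h a1 by linarith
  qed
  have S: "(\<Sum>i<n. 1/2 - 3/2 * (if l!i \<le> r then 1 else 0) - (real_of_int (l!i) - a)^2 / 4)
      \<le> (\<Sum>i<n. real_of_int (l!i) - a)" by (rule sum_mono) (rule pt)
  have S0: "(\<Sum>i<n. real_of_int (l!i) - a) = 0" using assms(1) by (simp add: sum_subtractf sum_negf)
  have S1: "(\<Sum>i<n. 1/2 - 3/2 * (if l!i \<le> r then 1 else 0) - (real_of_int (l!i) - a)^2 / 4)
     = n/2 - 3/2 * (\<Sum>i<n. if l!i \<le> r then 1 else 0) - (\<Sum>i<n. (real_of_int (l!i) - a)^2) / 4"
    by (simp add: sum_subtractf sum_distrib_left sum_divide_distrib)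
  show ?thesis by (rule lin_aux[OF S S0 S1])
qed

lemma count_high:
  assumes "(\<Sum>i<n. real_of_int (l!i) - a) = 0" "\<bar>real_of_int r - a\<bar> \<le> 1/2"
  shows "(\<Sum>i<n. if r \<le> l!i then 1 else 0) \<ge> (2 * n - (\<Sum>i<n. (real_of_int (l!i) - a)^2)) / 6"
proof -
  have a1: "a \<ge> real_of_int r - 1/2" using assms(2) abs_le_iff[of "real_of_int r - a" "1/2"] by linarith
  have pt: "a - real_of_int (l!i) \<ge> 1/2 - 3/2 * (if r \<le> l!i then 1 else 0) - (real_of_int (l!i) - a)^2 / 4" for i
  proof (cases "r \<le> l!i")
    case True
    then show ?thesis using aux2[of "real_of_int (l!i) - a"] by simp
  next
    case False
    then have h: "real_of_int (l!i) \<le> real_of_int r - 1" by simp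
    have "(if r \<le> l!i then 1 else 0) = (0::real)" using False by simp
    moreover have "0 \<le> (real_of_int (l!i) - a)^2/4" by simp
    ultimately show ?thesis using h a1 by linarith
  qed
  have S: "(\<Sum>i<n. 1/2 - 3/2 * (if r \<le> l!i then 1 else 0) - (real_of_int (l!i) - a)^2 / 4)
      \<le> (\<Sum>i<n. a - real_of_int (l!i))" by (rule sum_mono) (rule pt)
  have S0: "(\<Sum>i<n. a - real_of_int (l!i)) = 0" using assms(1) by (simp add: sum_subtractf sum_negf)
  have S1: "(\<Sum>i<n. 1/2 - 3/2 * (if r \<le> l!i then 1 else 0) - (real_of_int (l!i) - a)^2 / 4)
     = n/2 - 3/2 * (\<Sum>i<n. if r \<le> l!i then 1 else 0) - (\<Sum>i<n. (real_of_int (l!i) - a)^2) / 4"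
    by (simp add: sum_subtractf sum_distrib_left sum_divide_distrib)
  show ?thesis by (rule lin_aux[OF S S0 S1])
qed


definition Upot :: "real \<Rightarrow> int \<Rightarrow> int list \<Rightarrow> real" where
  "Upot a r l = (if phi a l \<ge> real (length l) then phi a l else V2 r l)"

lemma Upot_nn: "Upot a r l \<ge> 0" unfolding Upot_def using phi_nn V2_nn by simp

lemma phi_bal_len: "length (lb_balance l p) = length l" by (rule bal_len)

lemma bnd_row:
  "(\<Sum>v<n. bnd r x (l!v)) = hu r x / 2 * (\<Sum>v<n. if l!v \<le> r then 1 else 0)
                             + hd r x / 2 * (\<Sum>v<n. if r \<le> l!v then 1 else 0)"
proof -
  have "\<And>v. bnd r x (l!v) = hu r x / 2 * (if l!v \<le> r then 1 else 0) + hd r x / 2 * (if r \<le> l!v then 1 else 0)"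
    unfolding bnd_def by simp
  then show ?thesis by (simp add: sum.distrib sum_distrib_left)
qed

lemma drift:
  assumes ln: "length l = n" and n2: "n \<ge> 2"
    and a: "a = real_of_int (sum_list l) / n" and r: "r = round a"
  shows "(\<Sum>p\<in>lb_pairs n. Upot a r (lb_balance l p)) \<le> real (n * (n - 1)) * (1 - 1 / (40 * real n)) * Upot a r l"
proof -
  have ra: "\<bar>real_of_int r - a\<bar> \<le> 1/2" using r of_int_round_abs_le by simp
  have S0: "(\<Sum>i<n. real_of_int (l!i) - a) = 0" using sum_dev0[OF ln _ a] n2 by simp
  define \<Phi> where "\<Phi> = phi a l"
  have \<Phi>_def': "\<Phi> = (\<Sum>i<n. (real_of_int (l!i) - a)^2)" unfolding \<Phi>_def phi_def ln ..
  have \<Phi>nn: "\<Phi> \<ge> 0" unfolding \<Phi>_def by (rule phi_nn)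
  have cardP: "(\<Sum>p\<in>lb_pairs n. c) = real (n * (n - 1)) * c" for c :: real
    using pairs_card[of n] by simp
  have N2: "real n \<ge> 2" using n2 by simp
  have Nsub: "real (n * (n - 1)) = real n * real n - real n" using n2
    by (simp add: of_nat_diff algebra_simps)
  show ?thesis
  proof (cases "\<Phi> \<ge> real n")
    case True
    then have U: "Upot a r l = \<Phi>" unfolding Upot_def \<Phi>_def ln by simp
    let ?g = "\<lambda>p. ((real_of_int (l ! fst p) - real_of_int (l ! snd p))^2 - 1) / 2"
    have pt: "Upot a r (lb_balance l p) \<le> \<Phi> - ?g p" if pP: "p \<in> lb_pairs n" for p
    proof -
      obtain u v where p: "p = (u, v)" "u < length l" "v < length l" "u \<noteq> v"
        using pP ln unfolding lb_pairs_def by auto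
      have "Upot a r (lb_balance l p) \<le> phi a (lb_balance l p)"
        unfolding Upot_def using V2_le_phi[OF ra] by simp
      also have "\<dots> \<le> \<Phi> - ?g p" using phi_bal(1)[OF p(2-4), of a] p(1) unfolding \<Phi>_def by simp
      finally show ?thesis .
    qed
    have "(\<Sum>p\<in>lb_pairs n. Upot a r (lb_balance l p)) \<le> (\<Sum>p\<in>lb_pairs n. \<Phi> - ?g p)"
      by (rule sum_mono) (rule pt)
    also have "\<dots> = real (n * (n - 1)) * \<Phi> - (\<Sum>p\<in>lb_pairs n. ?g p)"
      by (simp add: sum_subtractf pairs_card)
    also have "(\<Sum>p\<in>lb_pairs n. ?g p) = (\<Sum>u<n. \<Sum>v<n. ?g (u, v)) - (\<Sum>u<n. ?g (u, u))"
      by (rule sum_pairs)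
    also have "(\<Sum>u<n. ?g (u, u)) = - real n / 2" by simp
    also have "(\<Sum>u<n. \<Sum>v<n. ?g (u, v)) = real n * \<Phi> - real n * real n / 2"
    proof -
      have "(\<Sum>u<n. \<Sum>v<n. ?g (u, v)) = (\<Sum>u<n. \<Sum>v<n. ((real_of_int (l!u) - a) - (real_of_int (l!v) - a))^2 / 2 - 1/2)"
        by (intro sum.cong refl) (simp add: diff_divide_distrib)
      also have "\<dots> = (\<Sum>u<n. \<Sum>v<n. ((real_of_int (l!u) - a) - (real_of_int (l!v) - a))^2) / 2 - real n * real n / 2"
        by (simp add: sum_subtractf sum_divide_distrib)
      also have "\<dots> = real n * \<Phi> - real n * real n / 2"
        using sq_identity[of "\<lambda>i. real_of_int (l!i) - a" n, OF S0] unfolding \<Phi>_def' by simp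
      finally show ?thesis .
    qed
    finally have A: "(\<Sum>p\<in>lb_pairs n. Upot a r (lb_balance l p))
        \<le> real (n * (n - 1)) * \<Phi> - (real n * \<Phi> - real n * real n / 2 - - real n / 2)" .
    have m1: "real n * real n \<le> real n * \<Phi>" using True by (intro mult_left_mono) auto
    have m2: "real n * \<Phi> \<ge> 0" using \<Phi>nn by simp
    have "real (n * (n - 1)) * \<Phi> - (real n * \<Phi> - real n * real n / 2 - - real n / 2)
        \<le> real (n * (n - 1)) * (1 - 1 / (40 * real n)) * \<Phi>"
    proof -
      have e: "real (n * (n - 1)) * (1 - 1 / (40 * real n)) * \<Phi> = real (n * (n - 1)) * \<Phi> - (real n - 1) * \<Phi> / 40"
        using n2 by (simp add: of_nat_diff field_simps)
      have e1: "(real n - 1) * \<Phi> = real n * \<Phi> - \<Phi>" by (simp add: algebra_simps)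
      have X: "real n * real n / 2 - real n / 2 + (real n - 1) * \<Phi> / 40 \<le> real n * \<Phi>"
        unfolding e1 using m1 m2 \<Phi>nn N2 by argo
      show ?thesis unfolding e using X by argo
    qed
    with A show ?thesis unfolding U by argo
  next
    case False
    then have U: "Upot a r l = V2 r l" unfolding Upot_def \<Phi>_def ln by simp
    have pt: "Upot a r (lb_balance l p) \<le> V2 r l - bnd r (l ! fst p) (l ! snd p)" if pP: "p \<in> lb_pairs n" for p
    proof -
      obtain u v where p: "p = (u, v)" "u < length l" "v < length l" "u \<noteq> v"
        using pP ln unfolding lb_pairs_def by auto
      have "phi a (lb_balance l p) < real (length (lb_balance l p))"
        using phi_bal(2)[OF p(2-4), of a] p(1) False ln unfolding \<Phi>_def bal_len by simp
      then have "Upot a r (lb_balance l p) = V2 r (lb_balance l p)" unfolding Upot_def by simp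
      also have "\<dots> \<le> V2 r l - bnd r (l ! fst p) (l ! snd p)" using V2_bal[OF p(2-4), of r] p(1) by simp
      finally show ?thesis .
    qed
    have "(\<Sum>p\<in>lb_pairs n. Upot a r (lb_balance l p)) \<le> (\<Sum>p\<in>lb_pairs n. V2 r l - bnd r (l ! fst p) (l ! snd p))"
      by (rule sum_mono) (rule pt)
    also have "\<dots> = real (n * (n - 1)) * V2 r l - (\<Sum>p\<in>lb_pairs n. bnd r (l ! fst p) (l ! snd p))"
      by (simp add: sum_subtractf pairs_card)
    also have "(\<Sum>p\<in>lb_pairs n. bnd r (l ! fst p) (l ! snd p)) = (\<Sum>u<n. \<Sum>v<n. bnd r (l!u) (l!v))"
      using sum_pairs[of "\<lambda>p. bnd r (l ! fst p) (l ! snd p)" n] by (simp add: bnd_diag)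
    finally have A: "(\<Sum>p\<in>lb_pairs n. Upot a r (lb_balance l p)) \<le> real (n * (n - 1)) * V2 r l - (\<Sum>u<n. \<Sum>v<n. bnd r (l!u) (l!v))" .
    have Lc: "(\<Sum>v<n. if l!v \<le> r then 1 else 0) \<ge> real n / 6"
      using count_low[OF S0 ra] False unfolding \<Phi>_def' by simp
    have Hc: "(\<Sum>v<n. if r \<le> l!v then 1 else 0) \<ge> real n / 6"
      using count_high[OF S0 ra] False unfolding \<Phi>_def' by simp
    have B: "(\<Sum>u<n. \<Sum>v<n. bnd r (l!u) (l!v)) \<ge> real n / 12 * V2 r l"
    proof -
      have "real n / 12 * V2 r l = (\<Sum>u<n. hu r (l!u) / 2 * (real n / 6) + hd r (l!u) / 2 * (real n / 6))"
        unfolding V2_def ln by (simp add: sum_distrib_left algebra_simps)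
      also have "\<dots> \<le> (\<Sum>u<n. \<Sum>v<n. bnd r (l!u) (l!v))"
        unfolding bnd_row
        by (intro sum_mono add_mono mult_left_mono Lc Hc) (auto simp: hu_nn hd_nn)
      finally show ?thesis .
    qed
    have V0: "V2 r l \<ge> 0" by (rule V2_nn)
    have e: "real (n * (n - 1)) * (1 - 1 / (40 * real n)) * V2 r l = real (n * (n - 1)) * V2 r l - (real n - 1) * V2 r l / 40"
      using n2 by (simp add: of_nat_diff field_simps)
    have "(real n - 1) * V2 r l / 40 \<le> real n / 12 * V2 r l"
      using V0 N2 by (simp add: algebra_simps mult_right_mono)
    then show ?thesis unfolding U e using A B by argo
  qed
qed


lemma step_bound:
  assumes ln: "length l = n" and n2: "n \<ge> 2"
    and a: "a = real_of_int (sum_list l) / n" and r: "r = round a"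
  shows "(\<integral>\<^sup>+ y. ennreal (Upot a r y) \<partial>lb_step l) \<le> ennreal ((1 - 1 / (40 * real n)) * Upot a r l)"
proof -
  let ?P = "lb_pairs n"
  have ne: "?P \<noteq> {}" using pairs_ne n2 by simp
  have fin: "finite ?P" by (rule pairs_finite)
  have cpos: "real (card ?P) > 0" using ne fin by (simp add: card_gt_0_iff)
  have "(\<integral>\<^sup>+ y. ennreal (Upot a r y) \<partial>lb_step l)
      = (\<integral>\<^sup>+ p. ennreal (Upot a r (lb_balance l p)) \<partial>pmf_of_set ?P)"
    unfolding lb_step_def ln by simp
  also have "\<dots> = (\<Sum>p\<in>?P. ennreal (Upot a r (lb_balance l p))) / of_nat (card ?P)"
    by (rule nn_integral_pmf_of_set[OF ne fin])
  also have "\<dots> = ennreal (\<Sum>p\<in>?P. Upot a r (lb_balance l p)) / ennreal (real (card ?P))"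
    using Upot_nn by (simp add: ennreal_of_nat_eq_real_of_nat)
  also have "\<dots> = ennreal ((\<Sum>p\<in>?P. Upot a r (lb_balance l p)) / real (card ?P))"
    using cpos Upot_nn by (intro divide_ennreal) (auto intro: sum_nonneg)
  also have "\<dots> \<le> ennreal ((1 - 1 / (40 * real n)) * Upot a r l)"
  proof (rule ennreal_leI)
    have "(\<Sum>p\<in>?P. Upot a r (lb_balance l p)) \<le> real (card ?P) * ((1 - 1 / (40 * real n)) * Upot a r l)"
      using drift[OF ln n2 a r] unfolding pairs_card by (simp add: mult.assoc)
    then show "(\<Sum>p\<in>?P. Upot a r (lb_balance l p)) / real (card ?P) \<le> (1 - 1 / (40 * real n)) * Upot a r l"
      using cpos by (simp add: divide_le_eq mult.commute)
  qed
  finally show ?thesis .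
qed

lemma hit_inv:
  assumes "length l \<ge> 2"
  shows "s \<in> set_pmf (lb_hit r t l) \<Longrightarrow>
     length (fst s) = length l \<and> sum_list (fst s) = sum_list l \<and> (in_band r (fst s) \<longrightarrow> snd s)"
proof (induction t arbitrary: s)
  case 0
  then show ?case by simp
next
  case (Suc t)
  from Suc.prems obtain x b where xb: "(x, b) \<in> set_pmf (lb_hit r t l)"
    and y: "s \<in> set_pmf (map_pmf (\<lambda>y. (y, b \<or> in_band r y)) (lb_step x))"
    by auto
  have ih: "length x = length l" "sum_list x = sum_list l" using Suc.IH[OF xb] by auto
  then have x2: "length x \<ge> 2" using assms by simp
  from y obtain p where p: "p \<in> lb_pairs (length x)" "s = (lb_balance x p, b \<or> in_band r (lb_balance x p))"
    using set_step[OF x2] by auto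
  show ?case using p ih bal_len bal_sum[OF p(1)] by simp
qed

lemma hit_exp:
  assumes ln: "length l = n" and n2: "n \<ge> 2"
    and a: "a = real_of_int (sum_list l) / n" and r: "r = round a"
  shows "(\<integral>\<^sup>+ s. ennreal (Upot a r (fst s)) \<partial>lb_hit r t l) \<le> ennreal ((1 - 1 / (40 * real n))^t * Upot a r l)"
proof (induction t)
  case 0
  then show ?case using Upot_nn by simp
next
  case (Suc t)
  let ?\<rho> = "1 - 1 / (40 * real n)"
  have \<rho>: "?\<rho> \<ge> 0" using n2 by (simp add: field_simps)
  have "(\<integral>\<^sup>+ s. ennreal (Upot a r (fst s)) \<partial>lb_hit r (Suc t) l)
     = (\<integral>\<^sup>+ xb. (\<integral>\<^sup>+ y. ennreal (Upot a r y) \<partial>lb_step (fst xb)) \<partial>lb_hit r t l)"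
    by (simp add: case_prod_beta)
  also have "\<dots> \<le> (\<integral>\<^sup>+ xb. ennreal ?\<rho> * ennreal (Upot a r (fst xb)) \<partial>lb_hit r t l)"
  proof (rule nn_integral_mono_AE)
    show "AE xb in measure_pmf (lb_hit r t l).
        (\<integral>\<^sup>+ y. ennreal (Upot a r y) \<partial>lb_step (fst xb)) \<le> ennreal ?\<rho> * ennreal (Upot a r (fst xb))"
      unfolding AE_measure_pmf_iff
    proof
      fix xb assume "xb \<in> set_pmf (lb_hit r t l)"
      then have i: "length (fst xb) = n" "sum_list (fst xb) = sum_list l"
        using hit_inv[where l=l and r=r and s=xb and t=t] ln n2 by auto
      have "(\<integral>\<^sup>+ y. ennreal (Upot a r y) \<partial>lb_step (fst xb)) \<le> ennreal (?\<rho> * Upot a r (fst xb))"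
        using step_bound[OF i(1) n2 _ r] a i(2) by simp
      then show "(\<integral>\<^sup>+ y. ennreal (Upot a r y) \<partial>lb_step (fst xb)) \<le> ennreal ?\<rho> * ennreal (Upot a r (fst xb))"
        by (simp only: ennreal_mult[OF \<rho> Upot_nn, symmetric])
    qed
  qed
  also have "\<dots> = ennreal ?\<rho> * (\<integral>\<^sup>+ xb. ennreal (Upot a r (fst xb)) \<partial>lb_hit r t l)"
    by (rule nn_integral_cmult) simp
  also have "\<dots> \<le> ennreal ?\<rho> * ennreal (?\<rho>^t * Upot a r l)"
    by (rule mult_left_mono[OF Suc.IH]) simp
  also have "\<dots> = ennreal (?\<rho>^Suc t * Upot a r l)"
    using \<rho> Upot_nn by (simp add: ennreal_mult[symmetric] mult.assoc)
  finally show ?case .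
qed


lemma not_band_U:
  assumes "length y \<ge> 2" "\<not> in_band r y"
  shows "Upot a r y \<ge> 1"
proof (cases "phi a y \<ge> real (length y)")
  case True
  then show ?thesis unfolding Upot_def using assms(1) by simp
next
  case False
  then have U: "Upot a r y = V2 r y" unfolding Upot_def by simp
  from assms(2) obtain i where i: "i < length y" "y!i \<notin> {r - 1, r, r + 1}"
    unfolding in_band_def by auto
  have one: "hu r (y!i) + hd r (y!i) \<ge> 1"
  proof (cases "y!i \<ge> r + 2")
    case True
    then have "1 \<le> (max (y!i - r - 1) 0)^2" using one_le_power[of "max (y!i - r - 1) 0" 2] by simp
    then have "1 \<le> hu r (y!i)" unfolding hu_def by (metis of_int_1 of_int_le_iff)
    then show ?thesis using hd_nn[of r "y!i"] by simp
  next
    case False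
    then have "y!i \<le> r - 2" using i(2) by auto
    then have "1 \<le> (max (r - 1 - y!i) 0)^2" using one_le_power[of "max (r - 1 - y!i) 0" 2] by simp
    then have "1 \<le> hd r (y!i)" unfolding hd_def by (metis of_int_1 of_int_le_iff)
    then show ?thesis using hu_nn[of r "y!i"] by simp
  qed
  have "hu r (y!i) + hd r (y!i) \<le> V2 r y"
    unfolding V2_def by (rule member_le_sum) (use i hu_nn hd_nn in \<open>auto intro: add_nonneg_nonneg\<close>)
  then show ?thesis using U one by simp
qed

lemma Upot_le_phi: "\<bar>real_of_int r - a\<bar> \<le> 1/2 \<Longrightarrow> Upot a r l \<le> phi a l"
  unfolding Upot_def using V2_le_phi by auto

lemma phi_bound:
  assumes ln: "length l = n" "n > 0" and a: "a = real_of_int (sum_list l) / n"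
  shows "phi a l \<le> real n * (real_of_int (discrepancy l))^2"
proof -
  let ?M = "Max (set l)" and ?m = "Min (set l)"
  have ne: "set l \<noteq> {}" using ln by auto
  have bnd: "?m \<le> l!i \<and> l!i \<le> ?M" if "i < n" for i
    using that ln ne by (auto intro: Min_le Max_ge)
  have s: "real_of_int (sum_list l) = (\<Sum>i<n. real_of_int (l!i))"
    using ln by (simp add: sum_list_sum_nth atLeast0LessThan)
  have "(\<Sum>i<n. real_of_int (l!i)) \<le> (\<Sum>i<n. real_of_int ?M)" by (rule sum_mono) (use bnd in simp)
  then have aM: "a \<le> ?M" using a s ln by (simp add: divide_le_eq mult.commute)
  have "(\<Sum>i<n. real_of_int ?m) \<le> (\<Sum>i<n. real_of_int (l!i))" by (rule sum_mono) (use bnd in simp)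
  then have am: "?m \<le> a" using a s ln by (simp add: le_divide_eq mult.commute)
  have "phi a l = (\<Sum>i<n. (real_of_int (l!i) - a)^2)" unfolding phi_def ln ..
  also have "\<dots> \<le> (\<Sum>i<n. (real_of_int (discrepancy l))^2)"
  proof (rule sum_mono)
    fix i assume "i \<in> {..<n}"
    then have b: "?m \<le> l!i" "l!i \<le> ?M" using bnd by auto
    have "\<bar>real_of_int (l!i) - a\<bar> \<le> \<bar>real_of_int (discrepancy l)\<bar>"
      unfolding discrepancy_def using b aM am by (simp add: abs_le_iff)
    then show "(real_of_int (l!i) - a)^2 \<le> (real_of_int (discrepancy l))^2"
      using abs_le_square_iff by blast
  qed
  finally show ?thesis by simp
qed

lemma numeric:
  fixes U0 D :: real
  assumes n2: "n \<ge> 2" and D1: "D \<ge> 1" and U0: "U0 \<le> real n * D^2" "U0 \<ge> 0"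
    and t: "t = nat \<lceil>80 * (real n * ln D + real n * ln (real n))\<rceil>"
  shows "(1 - 1 / (40 * real n))^t * U0 \<le> 1 / real n"
proof -
  let ?x = "1 / (40 * real n)"
  have N: "real n \<ge> 2" using n2 by simp
  have x0: "0 \<le> ?x" "?x \<le> 1" using N by (auto simp: field_simps)
  have "(1 - ?x)^t \<le> (exp (- ?x))^t"
    using x0 exp_ge_add_one_self[of "- ?x"] by (intro power_mono) auto
  also have "\<dots> = exp (real t * (- ?x))" by (rule exp_of_nat_mult[symmetric])
  also have "\<dots> \<le> exp (- (2 * ln D + 2 * ln (real n)))"
  proof -
    have "real t \<ge> 80 * (real n * ln D + real n * ln (real n))"
      using t real_nat_ceiling_ge by simp
    then have "real t * ?x \<ge> 80 * (real n * ln D + real n * ln (real n)) * ?x"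
      using x0 by (intro mult_right_mono) auto
    moreover have "80 * (real n * ln D + real n * ln (real n)) * ?x = 2 * ln D + 2 * ln (real n)"
      using N by (simp add: field_simps)
    ultimately show ?thesis by simp
  qed
  also have "\<dots> = 1 / (D^2 * (real n)^2)"
  proof -
    have "ln (D^2 * (real n)^2) = 2 * ln D + 2 * ln (real n)"
      using D1 N by (simp add: ln_mult ln_realpow)
    then have "exp (2 * ln D + 2 * ln (real n)) = D^2 * (real n)^2"
      using D1 N by (metis exp_ln mult_pos_pos zero_less_power order.strict_trans2 zero_less_one less_le_trans zero_less_numeral)
    then show ?thesis unfolding exp_minus by (simp add: inverse_eq_divide)
  qed
  finally have p: "(1 - ?x)^t \<le> 1 / (D^2 * (real n)^2)" .
  have "(1 - ?x)^t * U0 \<le> 1 / (D^2 * (real n)^2) * (real n * D^2)"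
    using p U0 x0 by (intro mult_mono) auto
  also have "\<dots> = 1 / real n" using D1 N by (simp add: field_simps power2_eq_square)
  finally show ?thesis .
qed


lemma main_bound:
  assumes n2: "n \<ge> 2" and ln: "length l0 = n" and dpos: "discrepancy l0 > 0"
  shows "measure_pmf.prob
        (lb_hit (round (real_of_int (sum_list l0) / real n))
                (nat \<lceil>80 * (real n * ln (real_of_int (discrepancy l0)) + real n * ln (real n))\<rceil>) l0)
        {s. snd s} \<ge> 1 - 1 / real n"
proof -
  define a where "a = real_of_int (sum_list l0) / real n"
  define r where "r = round a"
  define t where "t = nat \<lceil>80 * (real n * ln (real_of_int (discrepancy l0)) + real n * ln (real n))\<rceil>"
  define M where "M = lb_hit r t l0"
  define \<rho> where "\<rho> = 1 - 1 / (40 * real n)"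
  have ra: "\<bar>real_of_int r - a\<bar> \<le> 1/2" unfolding r_def using of_int_round_abs_le by simp
  have E: "(\<integral>\<^sup>+ s. ennreal (Upot a r (fst s)) \<partial>M) \<le> ennreal (\<rho>^t * Upot a r l0)"
    unfolding M_def \<rho>_def using hit_exp[OF ln n2 a_def r_def] .
  let ?A = "{s. \<not> snd s}"
  have "emeasure M ?A = (\<integral>\<^sup>+ s. indicator ?A s \<partial>M)" by simp
  also have "\<dots> \<le> (\<integral>\<^sup>+ s. ennreal (Upot a r (fst s)) \<partial>M)"
  proof (rule nn_integral_mono_AE)
    show "AE s in measure_pmf M. indicator ?A s \<le> ennreal (Upot a r (fst s))"
      unfolding AE_measure_pmf_iff
    proof
      fix s assume s: "s \<in> set_pmf M"
      then have i: "length (fst s) = n" "in_band r (fst s) \<longrightarrow> snd s"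
        using hit_inv[where l=l0 and r=r and s=s and t=t] ln n2 unfolding M_def by auto
      show "indicator ?A s \<le> ennreal (Upot a r (fst s))"
      proof (cases "snd s")
        case True then show ?thesis by simp
      next
        case False
        then have "Upot a r (fst s) \<ge> 1" using i n2 not_band_U[of "fst s" r a] by auto
        then show ?thesis using False by simp
      qed
    qed
  qed
  also note E
  finally have em: "emeasure M ?A \<le> ennreal (\<rho>^t * Upot a r l0)" .
  have U0: "Upot a r l0 \<le> real n * (real_of_int (discrepancy l0))^2"
    using Upot_le_phi[OF ra, of l0] phi_bound[OF ln _ a_def] n2 by simp
  have D1: "real_of_int (discrepancy l0) \<ge> 1" using dpos by simp
  have num: "\<rho>^t * Upot a r l0 \<le> 1 / real n"
    unfolding \<rho>_def by (rule numeric[OF n2 D1 U0 Upot_nn t_def])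
  have pA: "measure_pmf.prob M ?A \<le> 1 / real n"
  proof -
    have "ennreal (measure_pmf.prob M ?A) \<le> ennreal (\<rho>^t * Upot a r l0)"
      using em by (simp add: measure_pmf.emeasure_eq_measure)
    moreover have "\<rho>^t * Upot a r l0 \<ge> 0"
      using Upot_nn n2 unfolding \<rho>_def by (intro mult_nonneg_nonneg zero_le_power) (auto simp: field_simps)
    ultimately have "measure_pmf.prob M ?A \<le> \<rho>^t * Upot a r l0" by simp
    then show ?thesis using num by linarith
  qed
  have "measure_pmf.prob M {s. snd s} = 1 - measure_pmf.prob M ?A"
  proof -
    have "measure_pmf.prob M (space (measure_pmf M) - ?A) = 1 - measure_pmf.prob M ?A"
      by (rule measure_pmf.prob_compl) simp
    moreover have "space (measure_pmf M) - ?A = {s. snd s}" by auto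
    ultimately show ?thesis by simp
  qed
  then have "measure_pmf.prob M {s. snd s} \<ge> 1 - 1 / real n" using pA by linarith
  then show ?thesis unfolding M_def r_def a_def t_def .
qed

theorem theorem1:
  shows "\<exists>C > (0::real). \<exists>D > (0::real). \<forall>n \<ge> 2. \<forall>l0 :: int list.
     length l0 = n \<longrightarrow> (\<forall>x \<in> set l0. 0 \<le> x) \<longrightarrow> discrepancy l0 > 0 \<longrightarrow>
     measure_pmf.prob
        (lb_hit (round (real_of_int (sum_list l0) / real n))
                (nat \<lceil>C * (real n * ln (real_of_int (discrepancy l0)) + real n * ln (real n))\<rceil>) l0)
        {s. snd s}
       \<ge> 1 - D / real n"
proof (rule exI[of _ 80], rule conjI)
  show "(80::real) > 0" by simp
  show "\<exists>D > (0::real). \<forall>n \<ge> 2. \<forall>l0 :: int list.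
     length l0 = n \<longrightarrow> (\<forall>x \<in> set l0. 0 \<le> x) \<longrightarrow> discrepancy l0 > 0 \<longrightarrow>
     measure_pmf.prob
        (lb_hit (round (real_of_int (sum_list l0) / real n))
                (nat \<lceil>80 * (real n * ln (real_of_int (discrepancy l0)) + real n * ln (real n))\<rceil>) l0)
        {s. snd s}
       \<ge> 1 - D / real n"
  proof (rule exI[of _ 1], intro conjI allI impI)
    fix n :: nat and l0 :: "int list"
    assume "n \<ge> 2" "length l0 = n" "discrepancy l0 > 0"
    then show "measure_pmf.prob
        (lb_hit (round (real_of_int (sum_list l0) / real n))
                (nat \<lceil>80 * (real n * ln (real_of_int (discrepancy l0)) + real n * ln (real n))\<rceil>) l0)
        {s. snd s} \<ge> 1 - 1 / real n" by (rule main_bound)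
  qed simp
qed

end
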